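(* If a graph $G$ has three distinct cutvertices lying in the same connected component of $G$, then $G$ does not belong to DH $\cap$ co-DH.
   Context: All graphs are finite and simple. A cutvertex is a vertex whose deletion increases the number of connected components. A graph is distance-hereditary if it has no induced subgraph isomorphic to a hole (an induced cycle of length at least $5$), the house (a $5$-cycle plus one chord), the domino (a $6$-cycle $v_1\dots v_6$ plus the chord $v_1v_4$), or the gem ($P_4$ plus a vertex adjacent to all four of its vertices). DH $\cap$ co-DH is the class of graphs $G$ such that both $G$ and its complement are distance-hereditary. *)

theory Defs
  imports Main
begin

definition simple_graph :: "'a set \<Rightarrow> ('a \<Rightarrow> 'a \<Rightarrow> bool) \<Rightarrow> bool" where
  "simple_graph V E \<longleftrightarrow> finite V \<and> (\<forall>x y. E x y \<longrightarrow> x \<in> V \<and> y \<in> V)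
     \<and> (\<forall>x y. E x y \<longrightarrow> E y x) \<and> (\<forall>x. \<not> E x x)"

definition complement :: "'a set \<Rightarrow> ('a \<Rightarrow> 'a \<Rightarrow> bool) \<Rightarrow> 'a \<Rightarrow> 'a \<Rightarrow> bool" where
  "complement V E x y \<longleftrightarrow> x \<in> V \<and> y \<in> V \<and> x \<noteq> y \<and> \<not> E x y"

definition reach :: "'a set \<Rightarrow> ('a \<Rightarrow> 'a \<Rightarrow> bool) \<Rightarrow> ('a \<times> 'a) set" where
  "reach V E = ({(x, y). x \<in> V \<and> y \<in> V \<and> E x y}\<^sup>*) \<inter> (V \<times> V)"

definition num_components :: "'a set \<Rightarrow> ('a \<Rightarrow> 'a \<Rightarrow> bool) \<Rightarrow> nat" where
  "num_components V E = card (V // reach V E)"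

text \<open>Deleting v: vertex set V - {v}; edges are automatically restricted by reach.\<close>
definition cutvertex :: "'a set \<Rightarrow> ('a \<Rightarrow> 'a \<Rightarrow> bool) \<Rightarrow> 'a \<Rightarrow> bool" where
  "cutvertex V E v \<longleftrightarrow> v \<in> V \<and> num_components (V - {v}) E > num_components V E"

definition has_induced :: "'a set \<Rightarrow> ('a \<Rightarrow> 'a \<Rightarrow> bool) \<Rightarrow> 'b set \<Rightarrow> ('b \<Rightarrow> 'b \<Rightarrow> bool) \<Rightarrow> bool" where
  "has_induced V E HV HE \<longleftrightarrow> (\<exists>f. inj_on f HV \<and> f ` HV \<subseteq> V \<and>
     (\<forall>x\<in>HV. \<forall>y\<in>HV. E (f x) (f y) \<longleftrightarrow> HE x y))"

definition cycle_edge :: "nat \<Rightarrow> nat \<Rightarrow> nat \<Rightarrow> bool" where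
  "cycle_edge n i j \<longleftrightarrow> i < n \<and> j < n \<and> (j = Suc i mod n \<or> i = Suc j mod n)"

definition house_edge :: "nat \<Rightarrow> nat \<Rightarrow> bool" where
  "house_edge i j \<longleftrightarrow> cycle_edge 5 i j \<or> {i, j} = {0, 2}"

definition domino_edge :: "nat \<Rightarrow> nat \<Rightarrow> bool" where
  "domino_edge i j \<longleftrightarrow> cycle_edge 6 i j \<or> {i, j} = {0, 3}"

definition gem_edge :: "nat \<Rightarrow> nat \<Rightarrow> bool" where
  "gem_edge i j \<longleftrightarrow> i < 5 \<and> j < 5 \<and> i \<noteq> j \<and>
     ((i < 4 \<and> j < 4 \<and> (j = Suc i \<or> i = Suc j)) \<or> i = 4 \<or> j = 4)"

definition distance_hereditary :: "'a set \<Rightarrow> ('a \<Rightarrow> 'a \<Rightarrow> bool) \<Rightarrow> bool" where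
  "distance_hereditary V E \<longleftrightarrow>
     (\<forall>n\<ge>5. \<not> has_induced V E {0..<n} (cycle_edge n)) \<and>
     \<not> has_induced V E {0..<5} house_edge \<and>
     \<not> has_induced V E {0..<6} domino_edge \<and>
     \<not> has_induced V E {0..<5} gem_edge"

definition DH_coDH :: "'a set \<Rightarrow> ('a \<Rightarrow> 'a \<Rightarrow> bool) \<Rightarrow> bool" where
  "DH_coDH V E \<longleftrightarrow> distance_hereditary V E \<and> distance_hereditary V (complement V E)"

end

theory Submission
  imports Defs
begin

lemma reach_sym:
  assumes "\<forall>x y. E x y \<longrightarrow> E y x" and "(x, y) \<in> reach W E"
  shows "(y, x) \<in> reach W E"
proof -
  let ?r = "{(x, y). x \<in> W \<and> y \<in> W \<and> E x y}"
  have c: "?r\<inverse> = ?r" using assms(1) by auto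
  have "(x, y) \<in> ?r\<^sup>*" using assms(2) by (simp add: reach_def)
  then have "(y, x) \<in> (?r\<inverse>)\<^sup>*" by (simp add: rtrancl_converseI)
  then show ?thesis using assms(2) c by (simp add: reach_def)
qed

lemma reach_trans: "(x, y) \<in> reach W E \<Longrightarrow> (y, z) \<in> reach W E \<Longrightarrow> (x, z) \<in> reach W E"
  unfolding reach_def by (auto intro: rtrancl_trans)

lemma reach_refl: "x \<in> W \<Longrightarrow> (x, x) \<in> reach W E"
  unfolding reach_def by auto

lemma reach_edge: "x \<in> W \<Longrightarrow> y \<in> W \<Longrightarrow> E x y \<Longrightarrow> (x, y) \<in> reach W E"
  unfolding reach_def by auto

lemma reach_in: "(x, y) \<in> reach W E \<Longrightarrow> x \<in> W \<and> y \<in> W"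
  unfolding reach_def by auto

lemma reach_mono: "W \<subseteq> V \<Longrightarrow> reach W E \<subseteq> reach V E"
proof -
  assume "W \<subseteq> V"
  then have "{(x, y). x \<in> W \<and> y \<in> W \<and> E x y} \<subseteq> {(x, y). x \<in> V \<and> y \<in> V \<and> E x y}" by auto
  then have "{(x, y). x \<in> W \<and> y \<in> W \<and> E x y}\<^sup>* \<subseteq> {(x, y). x \<in> V \<and> y \<in> V \<and> E x y}\<^sup>*"
    by (rule rtrancl_mono)
  then show ?thesis using \<open>W \<subseteq> V\<close> unfolding reach_def by auto
qed

lemma reach_equiv:
  assumes "\<forall>x y. E x y \<longrightarrow> E y x"
  shows "equiv W (reach W E)"
proof (rule equivI)
  show "reach W E \<subseteq> W \<times> W" by (auto dest: reach_in)
  show "refl_on W (reach W E)" by (rule refl_onI) (simp add: reach_refl)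
  show "sym (reach W E)" by (rule symI) (rule reach_sym[OF assms])
  show "trans (reach W E)" by (rule transI) (rule reach_trans)
qed

lemma cut_pair:
  assumes G: "simple_graph V E" and c: "cutvertex V E c"
  shows "\<exists>p q. p \<in> V - {c} \<and> q \<in> V - {c} \<and> (p, q) \<in> reach V E \<and> (p, q) \<notin> reach (V - {c}) E"
proof (rule ccontr)
  assume "\<not> ?thesis"
  then have H: "\<And>p q. p \<in> V - {c} \<Longrightarrow> q \<in> V - {c} \<Longrightarrow> (p, q) \<in> reach V E \<Longrightarrow> (p, q) \<in> reach (V - {c}) E"
    by blast
  define R where "R = reach V E"
  define R' where "R' = reach (V - {c}) E"
  have sym: "\<forall>x y. E x y \<longrightarrow> E y x" using G by (simp add: simple_graph_def)
  have eR: "equiv V R" unfolding R_def by (rule reach_equiv[OF sym])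
  have eR': "equiv (V - {c}) R'" unfolding R'_def by (rule reach_equiv[OF sym])
  have sub: "R' \<subseteq> R" unfolding R_def R'_def by (rule reach_mono) auto
  have key: "R `` (R' `` {p}) = R `` {p}" if "p \<in> V - {c}" for p
  proof
    show "R `` (R' `` {p}) \<subseteq> R `` {p}"
    proof
      fix z assume "z \<in> R `` (R' `` {p})"
      then obtain m where "(p, m) \<in> R'" "(m, z) \<in> R" by auto
      then have "(p, m) \<in> R" using sub by auto
      then show "z \<in> R `` {p}" using \<open>(m, z) \<in> R\<close> reach_trans unfolding R_def by auto
    qed
    have "(p, p) \<in> R'" using that unfolding R'_def by (simp add: reach_refl)
    then show "R `` {p} \<subseteq> R `` (R' `` {p})" by auto
  qed
  have fin: "finite V" using G by (simp add: simple_graph_def)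
  have finQ: "finite (V // R)"
    by (rule finite_quotient[OF fin]) (auto simp: R_def dest: reach_in)
  have inj: "inj_on (\<lambda>X. R `` X) ((V - {c}) // R')"
  proof (rule inj_onI)
    fix X Y assume X: "X \<in> (V - {c}) // R'" and Y: "Y \<in> (V - {c}) // R'" and eq: "R `` X = R `` Y"
    obtain p where p: "p \<in> V - {c}" "X = R' `` {p}" using X by (auto elim: quotientE)
    obtain q where q: "q \<in> V - {c}" "Y = R' `` {q}" using Y by (auto elim: quotientE)
    have "R `` {p} = R `` {q}" using eq key p q by simp
    then have "(p, q) \<in> R" using eR p q by (simp add: eq_equiv_class_iff)
    then have "(p, q) \<in> R'" using H p q unfolding R_def R'_def by blast
    then show "X = Y" using p q eR' by (simp add: equiv_class_eq)
  qed
  have img: "(\<lambda>X. R `` X) ` ((V - {c}) // R') \<subseteq> V // R"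
  proof
    fix Z assume "Z \<in> (\<lambda>X. R `` X) ` ((V - {c}) // R')"
    then obtain p where "p \<in> V - {c}" "Z = R `` (R' `` {p})" by (auto elim: quotientE)
    then show "Z \<in> V // R" using key by (auto intro: quotientI)
  qed
  have "card ((V - {c}) // R') \<le> card (V // R)"
    by (rule card_inj_on_le[OF inj img finQ])
  then show False using c unfolding cutvertex_def num_components_def R_def R'_def by simp
qed


lemma cut_nbr:
  assumes G: "simple_graph V E" and c: "cutvertex V E c" and d: "d \<in> V - {c}"
  shows "\<exists>a. E c a \<and> (a, d) \<notin> reach (V - {c}) E"
proof (rule ccontr)
  assume "\<not> ?thesis"
  then have N: "\<And>a. E c a \<Longrightarrow> (a, d) \<in> reach (V - {c}) E" by blast
  have sym: "\<forall>x y. E x y \<longrightarrow> E y x" and irr: "\<And>x. \<not> E x x"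
    using G by (auto simp: simple_graph_def)
  obtain p q where pq: "p \<in> V - {c}" "q \<in> V - {c}" "(p, q) \<in> reach V E" "(p, q) \<notin> reach (V - {c}) E"
    using cut_pair[OF G c] by blast
  let ?r = "{(x, y). x \<in> V \<and> y \<in> V \<and> E x y}"
  have rt: "(p, q) \<in> ?r\<^sup>*" using pq(3) by (simp add: reach_def)
  have inv: "(z \<noteq> c \<longrightarrow> (p, z) \<in> reach (V - {c}) E) \<and> (z = c \<longrightarrow> (p, d) \<in> reach (V - {c}) E)"
    if "(p, z) \<in> ?r\<^sup>*" for z
    using that
  proof (induction rule: rtrancl_induct)
    case base
    then show ?case using pq(1) by (simp add: reach_refl)
  next
    case (step y z)
    then have yz: "y \<in> V" "z \<in> V" "E y z" by auto
    show ?case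
    proof (cases "y = c")
      case True
      then have "z \<noteq> c" using irr yz by blast
      have "(p, d) \<in> reach (V - {c}) E" using step.IH True by simp
      moreover have "(z, d) \<in> reach (V - {c}) E" using N sym yz True by blast
      then have "(d, z) \<in> reach (V - {c}) E" by (rule reach_sym[OF sym])
      ultimately have "(p, z) \<in> reach (V - {c}) E" by (rule reach_trans)
      then show ?thesis using \<open>z \<noteq> c\<close> by simp
    next
      case False
      then have py: "(p, y) \<in> reach (V - {c}) E" using step.IH by simp
      show ?thesis
      proof (cases "z = c")
        case True
        have "(y, d) \<in> reach (V - {c}) E" using N sym yz True by blast
        then have "(p, d) \<in> reach (V - {c}) E" using py reach_trans by metis
        then show ?thesis using True by simp
      next
        case False
        have "(y, z) \<in> reach (V - {c}) E"
          using yz False \<open>y \<noteq> c\<close> by (simp add: reach_edge)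
        then have "(p, z) \<in> reach (V - {c}) E" using py reach_trans by metis
        then show ?thesis using False by simp
      qed
    qed
  qed
  have "(p, q) \<in> reach (V - {c}) E" using inv[OF rt] pq(2) by simp
  then show False using pq(4) by simp
qed


definition walk :: "('a \<Rightarrow> 'a \<Rightarrow> bool) \<Rightarrow> 'a list \<Rightarrow> bool" where
  "walk E ps \<longleftrightarrow> ps \<noteq> [] \<and> successively E ps"

lemma succ_take: "successively E xs \<Longrightarrow> successively E (take n xs)"
  by (metis append_take_drop_id successively_append_iff)

lemma succ_drop: "successively E xs \<Longrightarrow> successively E (drop n xs)"
  by (metis append_take_drop_id successively_append_iff)

lemma walk_exists:
  assumes "(x, y) \<in> {(a, b). a \<in> V \<and> b \<in> V \<and> E a b}\<^sup>*" and "x \<in> V"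
  shows "\<exists>ps. walk E ps \<and> hd ps = x \<and> last ps = y \<and> set ps \<subseteq> V"
  using assms(1)
proof (induction rule: rtrancl_induct)
  case base
  then show ?case using assms(2) by (intro exI[of _ "[x]"]) (simp add: walk_def)
next
  case (step y z)
  then obtain ps where ps: "walk E ps" "hd ps = x" "last ps = y" "set ps \<subseteq> V" by blast
  have "walk E (ps @ [z])" using ps step(2) by (auto simp: walk_def successively_append_iff)
  moreover have "hd (ps @ [z]) = x" using ps by (auto simp: walk_def)
  ultimately show ?case using ps step(2) by (intro exI[of _ "ps @ [z]"]) auto
qed

lemma walk_reach:
  "successively E ps \<Longrightarrow> ps \<noteq> [] \<Longrightarrow> set ps \<subseteq> W \<Longrightarrow> (hd ps, last ps) \<in> reach W E"
proof (induction ps rule: induct_list012)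
  case 1 then show ?case by simp
next
  case (2 x) then show ?case by (simp add: reach_refl)
next
  case (3 x y zs)
  then have "(y, last (y # zs)) \<in> reach W E" by simp
  moreover have "(x, y) \<in> reach W E" using 3 by (simp add: reach_edge)
  ultimately show ?case using reach_trans by fastforce
qed

lemma shortcut:
  assumes s: "successively E ps" and ij: "i < j" "j < length ps" and e: "E (ps ! i) (ps ! j)"
  defines "qs \<equiv> take (Suc i) ps @ drop j ps"
  shows "walk E qs \<and> hd qs = hd ps \<and> last qs = last ps \<and> length qs = length ps + Suc i - j
         \<and> set qs \<subseteq> set ps"
proof -
  have ne: "take (Suc i) ps \<noteq> []" "drop j ps \<noteq> []" using ij by auto
  have lt: "last (take (Suc i) ps) = ps ! i" using ij
    by (simp add: take_Suc_conv_app_nth)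
  have hd: "hd (drop j ps) = ps ! j" using ij by (simp add: hd_drop_conv_nth)
  have w: "walk E qs" unfolding qs_def walk_def
    using ne lt hd e succ_take[OF s] succ_drop[OF s] by (simp add: successively_append_iff)
  have "hd qs = hd ps" unfolding qs_def using ne ij by (cases ps) auto
  moreover have "last qs = last ps" unfolding qs_def using ne ij by simp
  moreover have "length qs = length ps + Suc i - j" unfolding qs_def using ij by simp
  moreover have "set qs \<subseteq> set ps" unfolding qs_def
    using set_take_subset set_drop_subset by fastforce
  ultimately show ?thesis using w by blast
qed

lemma min_walk:
  assumes "(x, y) \<in> reach V E"
  shows "\<exists>ps. walk E ps \<and> hd ps = x \<and> last ps = y \<and> set ps \<subseteq> V \<and> distinct ps \<and>
     (\<forall>i j. Suc i < j \<longrightarrow> j < length ps \<longrightarrow> \<not> E (ps ! i) (ps ! j))"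
proof -
  let ?P = "\<lambda>ps. walk E ps \<and> hd ps = x \<and> last ps = y \<and> set ps \<subseteq> V"
  have "\<exists>ps. ?P ps" using assms walk_exists[of x y V E] by (auto simp: reach_def)
  then obtain ps where P: "?P ps" and min: "\<And>qs. ?P qs \<Longrightarrow> length ps \<le> length qs"
    using ex_has_least_nat[where P="?P" and m=length] by blast
  have s: "successively E ps" and ne: "ps \<noteq> []" using P by (auto simp: walk_def)
  have chord: "\<not> E (ps ! i) (ps ! j)" if "Suc i < j" "j < length ps" for i j
  proof
    assume e: "E (ps ! i) (ps ! j)"
    define qs where "qs = take (Suc i) ps @ drop j ps"
    have "?P qs \<and> length qs < length ps"
      using shortcut[OF s _ that(2) e] that P unfolding qs_def by auto
    then show False using min by fastforce
  qed
  have dist: "distinct ps"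
  proof (rule ccontr)
    assume "\<not> distinct ps"
    then obtain i j where ij: "i < j" "j < length ps" "ps ! i = ps ! j"
      by (metis distinct_conv_nth linorder_neqE_nat)
    show False
    proof (cases i)
      case 0
      define qs where "qs = drop j ps"
      have "walk E qs" unfolding qs_def walk_def using ij succ_drop[OF s] by auto
      moreover have "hd qs = x" unfolding qs_def using ij 0 P ne
        by (simp add: hd_drop_conv_nth hd_conv_nth)
      moreover have "last qs = y" unfolding qs_def using ij P by simp
      moreover have "set qs \<subseteq> V" unfolding qs_def using P set_drop_subset by fastforce
      moreover have "length qs < length ps" unfolding qs_def using ij by simp
      ultimately show False using min by fastforce
    next
      case (Suc k)
      have e: "E (ps ! k) (ps ! j)" using successively_nth[OF s, of k] ij Suc by simp
      define qs where "qs = take (Suc k) ps @ drop j ps"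
      have "?P qs \<and> length qs < length ps"
        using shortcut[OF s _ ij(2) e] ij Suc P unfolding qs_def by auto
      then show False using min by fastforce
    qed
  qed
  show ?thesis using P dist chord by blast
qed


lemma house_co:
  assumes sym: "\<forall>x y. E x y \<longrightarrow> E y x"
    and V: "a \<in> V" "b \<in> V" "c \<in> V" "d \<in> V" "e \<in> V"
    and dist: "distinct [a, b, c, d, e]"
    and "E a b" "E b c" "E c d" "E d e"
    and "\<not> E a c" "\<not> E a d" "\<not> E a e" "\<not> E b d" "\<not> E b e" "\<not> E c e"
  shows "\<not> distance_hereditary V (complement V E)"
proof -
  define f where "f = (\<lambda>i::nat. [a, c, e, b, d] ! i)"
  have U: "{0..<5::nat} = {0,1,2,3,4}" by auto
  have Es: "E x y \<longleftrightarrow> E y x" for x y using sym by blast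
  have "has_induced V (complement V E) {0..<5} house_edge"
    unfolding has_induced_def
  proof (intro exI[of _ f] conjI)
    show "inj_on f {0..<5}" unfolding U f_def inj_on_def using dist by auto
    show "f ` {0..<5} \<subseteq> V" unfolding U f_def using V by auto
    show "\<forall>x\<in>{0..<5}. \<forall>y\<in>{0..<5}. complement V E (f x) (f y) = house_edge x y"
      unfolding U f_def house_edge_def cycle_edge_def complement_def
      using V dist assms(8-) by (auto simp: Es doubleton_eq_iff)
  qed
  then show ?thesis unfolding distance_hereditary_def by blast
qed

lemma gem_co:
  assumes sym: "\<forall>x y. E x y \<longrightarrow> E y x"
    and V: "a \<in> V" "b \<in> V" "c \<in> V" "d \<in> V" "e \<in> V"
    and dist: "distinct [a, b, c, d, e]"
    and "E a b" "E b c" "E c d"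
    and "\<not> E a c" "\<not> E a d" "\<not> E a e" "\<not> E b d" "\<not> E b e" "\<not> E c e" "\<not> E d e"
  shows "\<not> distance_hereditary V (complement V E)"
proof -
  define f where "f = (\<lambda>i::nat. [b, d, a, c, e] ! i)"
  have U: "{0..<5::nat} = {0,1,2,3,4}" by auto
  have Es: "E x y \<longleftrightarrow> E y x" for x y using sym by blast
  have "has_induced V (complement V E) {0..<5} gem_edge"
    unfolding has_induced_def
  proof (intro exI[of _ f] conjI)
    show "inj_on f {0..<5}" unfolding U f_def inj_on_def using dist by auto
    show "f ` {0..<5} \<subseteq> V" unfolding U f_def using V by auto
    show "\<forall>x\<in>{0..<5}. \<forall>y\<in>{0..<5}. complement V E (f x) (f y) = gem_edge x y"
      unfolding U f_def gem_edge_def complement_def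
      using V dist assms(8-) by (auto simp: Es doubleton_eq_iff)
  qed
  then show ?thesis unfolding distance_hereditary_def by blast
qed


lemma sep:
  assumes "(a, t) \<notin> reach W E" "(z, t) \<in> reach W E" "a \<in> W"
  shows "a \<noteq> z \<and> \<not> E a z"
proof
  show "a \<noteq> z" using assms by blast
  show "\<not> E a z"
  proof
    assume "E a z"
    then have "(a, z) \<in> reach W E" using assms(3) reach_in[OF assms(2)] by (simp add: reach_edge)
    then have "(a, t) \<in> reach W E" using assms(2) by (rule reach_trans)
    then show False using assms(1) by simp
  qed
qed

lemma p5:
  assumes G: "simple_graph V E" and cx: "cutvertex V E x" and cy: "cutvertex V E y"
    and xy: "x \<noteq> y" and r: "(x, y) \<in> reach V E" and ne: "\<not> E x y"
  shows "\<not> DH_coDH V E"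
proof -
  have sym: "\<forall>x y. E x y \<longrightarrow> E y x" and irr: "\<And>x. \<not> E x x"
    and EV: "\<And>x y. E x y \<Longrightarrow> x \<in> V \<and> y \<in> V"
    using G by (auto simp: simple_graph_def)
  have Es: "E p q \<longleftrightarrow> E q p" for p q using sym by blast
  have xV: "x \<in> V" and yV: "y \<in> V" using reach_in[OF r] by auto
  obtain ax where ax: "E x ax" "(ax, y) \<notin> reach (V - {x}) E"
    using cut_nbr[OF G cx, of y] yV xy by auto
  obtain ay where ay: "E y ay" "(ay, x) \<notin> reach (V - {y}) E"
    using cut_nbr[OF G cy, of x] xV xy by auto
  have axV: "ax \<in> V - {x}" using EV[OF ax(1)] irr ax(1) by auto
  have ayV: "ay \<in> V - {y}" using EV[OF ay(1)] irr ay(1) by auto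
  obtain ps where ps: "walk E ps" "hd ps = x" "last ps = y" "set ps \<subseteq> V" "distinct ps"
    and ch: "\<And>i j. Suc i < j \<Longrightarrow> j < length ps \<Longrightarrow> \<not> E (ps ! i) (ps ! j)"
    using min_walk[OF r] by blast
  have s: "successively E ps" and psne: "ps \<noteq> []" using ps(1) by (auto simp: walk_def)
  define n where "n = length ps"
  have p0: "ps ! 0 = x" using ps(2) psne by (simp add: hd_conv_nth)
  have pl: "ps ! (n - 1) = y" using ps(3) psne by (simp add: last_conv_nth n_def)
  have n3: "n \<ge> 3"
  proof (rule ccontr)
    assume "\<not> n \<ge> 3"
    moreover have "n \<noteq> 0" using psne n_def by simp
    moreover have "n \<noteq> 1" using p0 pl xy by auto
    moreover have "n \<noteq> 2" using successively_nth[OF s, of 0] p0 pl ne n_def by auto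
    ultimately show False by linarith
  qed
  have pV: "ps ! i \<in> V" if "i < n" for i using ps(4) that n_def by auto
  have pd: "ps ! i \<noteq> ps ! j" if "i < n" "j < n" "i \<noteq> j" for i j
    using ps(5) that n_def by (simp add: nth_eq_iff_index_eq)
  have pe: "E (ps ! i) (ps ! Suc i)" if "Suc i < n" for i using successively_nth[OF s] that n_def by simp
  have pc: "\<not> E (ps ! i) (ps ! j)" if "Suc i < j" "j < n" for i j using ch that n_def by simp
  have A: "(ps ! i, y) \<in> reach (V - {x}) E" if "1 \<le> i" "i < n" for i
  proof -
    have "set (drop i ps) \<subseteq> V - {x}"
    proof
      fix z assume "z \<in> set (drop i ps)"
      then obtain m where m: "m < length (drop i ps)" "z = drop i ps ! m" by (auto simp: in_set_conv_nth)
      then have "z = ps ! (i + m)" "i + m < n" using that n_def by auto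
      then show "z \<in> V - {x}" using pV pd[of "i + m" 0] p0 that by auto
    qed
    moreover have "drop i ps \<noteq> []" using that n_def by simp
    ultimately have "(hd (drop i ps), last (drop i ps)) \<in> reach (V - {x}) E"
      using walk_reach succ_drop[OF s] by blast
    then show ?thesis using that n_def ps(3) by (simp add: hd_drop_conv_nth)
  qed
  have B: "(ps ! i, x) \<in> reach (V - {y}) E" if "i < n - 1" for i
  proof -
    have "set (take (Suc i) ps) \<subseteq> V - {y}"
    proof
      fix z assume "z \<in> set (take (Suc i) ps)"
      then obtain m where m: "m < length (take (Suc i) ps)" "z = take (Suc i) ps ! m"
        by (auto simp: in_set_conv_nth)
      then have "z = ps ! m" "m \<le> i" using that n_def by auto
      then show "z \<in> V - {y}" using pV pd[of m "n - 1"] pl that by auto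
    qed
    moreover have "take (Suc i) ps \<noteq> []" using psne by simp
    ultimately have "(hd (take (Suc i) ps), last (take (Suc i) ps)) \<in> reach (V - {y}) E"
      using walk_reach succ_take[OF s] by blast
    moreover have "hd (take (Suc i) ps) = x" using ps(2) psne by (cases ps) auto
    moreover have "last (take (Suc i) ps) = ps ! i" using that n_def
      by (simp add: take_Suc_conv_app_nth)
    ultimately have "(x, ps ! i) \<in> reach (V - {y}) E" by simp
    then show ?thesis by (rule reach_sym[OF sym])
  qed
  have xx: "(x, x) \<in> reach (V - {y}) E" using xV xy by (simp add: reach_refl)
  have ayx: "ay \<noteq> x \<and> \<not> E ay x" using sep[OF ay(2) xx] ayV by simp
  have ayy: "(ay, y) \<in> reach (V - {x}) E"
    using ayV ayx yV xy ay(1) by (simp add: reach_edge Es)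
  have axay: "ax \<noteq> ay \<and> \<not> E ax ay" using sep[OF ax(2) ayy] axV by simp
  have sepA: "ax \<noteq> ps ! i \<and> \<not> E ax (ps ! i)" if "1 \<le> i" "i < n" for i
    using sep[OF ax(2) A[OF that]] axV by simp
  have sepB: "ay \<noteq> ps ! i \<and> \<not> E ay (ps ! i)" if "i < n - 1" for i
    using sep[OF ay(2) B[OF that]] ayV by simp
  have "\<not> distance_hereditary V (complement V E)"
  proof (cases "n = 3")
    case True
    have pl2: "ps ! 2 = y" using pl True by simp
    have "ps ! 0 \<noteq> ps ! 1" "ps ! 0 \<noteq> ps ! 2" "ps ! 1 \<noteq> ps ! 2"
      using pd True by auto
    moreover have "E (ps ! 0) (ps ! 1)" "E (ps ! 1) (ps ! 2)" using pe[of 0] pe[of 1] True by (auto simp: numeral_2_eq_2)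
    moreover note sepA[of 1] sepA[of 2] sepB[of 0] sepB[of 1]
    ultimately show ?thesis
      using house_co[OF sym, of ax V x "ps ! 1" y ay] axV pV[of 1] xV yV ayV True p0 pl2
        ax(1) ay(1) axay ayx ne irr
      by (auto simp: Es)
  next
    case False
    then have n4: "n \<ge> 4" using n3 by simp
    have "distinct [ps ! 0, ps ! 1, ps ! 2, ps ! 3]" using pd n4 by auto
    moreover have "E (ps ! 0) (ps ! 1)" "E (ps ! 1) (ps ! 2)" "E (ps ! 2) (ps ! 3)"
      using pe[of 0] pe[of 1] pe[of 2] n4 by (auto simp: numeral_2_eq_2 numeral_3_eq_3)
    moreover have "\<not> E (ps ! 0) (ps ! 2)" "\<not> E (ps ! 0) (ps ! 3)" "\<not> E (ps ! 1) (ps ! 3)"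
      using pc n4 by auto
    moreover note sepA[of 1] sepA[of 2] sepA[of 3]
    ultimately show ?thesis
      using house_co[OF sym, of ax V x "ps ! 1" "ps ! 2" "ps ! 3"] axV pV[of 1] pV[of 2] pV[of 3]
        xV n4 p0 ax(1) irr
      by (auto simp: Es)
  qed
  then show ?thesis unfolding DH_coDH_def by blast
qed


theorem lemma4:
  fixes V :: "'a set" and E :: "'a \<Rightarrow> 'a \<Rightarrow> bool" and u v w :: 'a
  assumes "simple_graph V E"
    and "cutvertex V E u" and "cutvertex V E v" and "cutvertex V E w"
    and "u \<noteq> v" and "u \<noteq> w" and "v \<noteq> w"
    and "(u, v) \<in> reach V E" and "(u, w) \<in> reach V E"
  shows "\<not> DH_coDH V E"
proof -
  note G = assms(1)
  have sym: "\<forall>x y. E x y \<longrightarrow> E y x" and irr: "\<And>x. \<not> E x x"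
    and EV: "\<And>x y. E x y \<Longrightarrow> x \<in> V \<and> y \<in> V"
    using G by (auto simp: simple_graph_def)
  have Es: "E p q \<longleftrightarrow> E q p" for p q using sym by blast
  have uV: "u \<in> V" and vV: "v \<in> V" and wV: "w \<in> V" using reach_in[OF assms(8)] reach_in[OF assms(9)] by auto
  have rvw: "(v, w) \<in> reach V E"
    using reach_trans[OF reach_sym[OF sym assms(8)] assms(9)] .
  show ?thesis
  proof (cases "E u v \<and> E u w \<and> E v w")
    case False
    then show ?thesis
      using p5[OF G assms(2,3,5,8)] p5[OF G assms(2,4,6,9)] p5[OF G assms(3,4,7) rvw] by blast
  next
    case True
    then have uv: "E u v" and uw: "E u w" and vw: "E v w" by auto
    obtain au where au: "E u au" "(au, v) \<notin> reach (V - {u}) E"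
      using cut_nbr[OF G assms(2), of v] vV assms(5) by auto
    obtain av where av: "E v av" "(av, u) \<notin> reach (V - {v}) E"
      using cut_nbr[OF G assms(3), of u] uV assms(5) by auto
    obtain aw where aw: "E w aw" "(aw, u) \<notin> reach (V - {w}) E"
      using cut_nbr[OF G assms(4), of u] uV assms(6) by auto
    have auV: "au \<in> V - {u}" using EV[OF au(1)] irr au(1) by auto
    have avV: "av \<in> V - {v}" using EV[OF av(1)] irr av(1) by auto
    have awV: "aw \<in> V - {w}" using EV[OF aw(1)] irr aw(1) by auto
    have "(u, u) \<in> reach (V - {v}) E" using uV assms(5) by (simp add: reach_refl)
    from sep[OF av(2) this] avV have avu: "av \<noteq> u \<and> \<not> E av u" by simp
    have "(u, u) \<in> reach (V - {w}) E" using uV assms(6) by (simp add: reach_refl)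
    from sep[OF aw(2) this] awV have awu: "aw \<noteq> u \<and> \<not> E aw u" by simp
    have "(v, u) \<in> reach (V - {w}) E" using uV vV assms by (simp add: reach_edge Es uv)
    from sep[OF aw(2) this] awV have awv: "aw \<noteq> v \<and> \<not> E aw v" by simp
    have "(v, v) \<in> reach (V - {u}) E" using vV assms(5) by (simp add: reach_refl)
    from sep[OF au(2) this] auV have auv: "au \<noteq> v \<and> \<not> E au v" by simp
    have "(av, v) \<in> reach (V - {u}) E" using avV vV avu assms(5) av(1) by (simp add: reach_edge Es)
    from sep[OF au(2) this] auV have auav: "au \<noteq> av \<and> \<not> E au av" by simp
    have "(aw, w) \<in> reach (V - {u}) E" using awV wV awu assms(6) aw(1) by (simp add: reach_edge Es)
    moreover have "(w, v) \<in> reach (V - {u}) E" using wV vV assms vw by (simp add: reach_edge Es)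
    ultimately have "(aw, v) \<in> reach (V - {u}) E" by (rule reach_trans)
    from sep[OF au(2) this] auV have auaw: "au \<noteq> aw \<and> \<not> E au aw" by simp
    have "(aw, w) \<in> reach (V - {v}) E" using awV wV awv assms(7) aw(1) by (simp add: reach_edge Es)
    moreover have "(w, u) \<in> reach (V - {v}) E" using wV uV assms uw by (simp add: reach_edge Es)
    ultimately have "(aw, u) \<in> reach (V - {v}) E" by (rule reach_trans)
    from sep[OF av(2) this] avV have avaw: "av \<noteq> aw \<and> \<not> E av aw" by simp
    have "\<not> distance_hereditary V (complement V E)"
      using gem_co[OF sym, of au V u v av aw] auV uV vV avV awV au(1) uv av(1)
        avu awu awv auv auav auaw avaw irr assms(5)
      by (auto simp: Es)
    then show ?thesis unfolding DH_coDH_def by blast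
  qed
qed

end
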